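(* Let $\mathcal{A}$ be a Banach algebra such that $\mathrm{rad}(\mathcal{A})=\mathrm{rann}(\mathcal{A})$ and $\mathcal{A}/\mathrm{rad}(\mathcal{A})$ is commutative, and suppose $\mathcal{A}$ has a right identity. Let $(\delta,d)$ be a generalized derivation of $\mathcal{A}$. Then the following are equivalent: (i) $\delta$ is skew centralizing; (ii) for every $k\in\mathbb{N}$, $\delta$ is $k$-skew centralizing; (iii) there exists $k\in\mathbb{N}$ such that $\delta$ is $k$-skew centralizing.
   Context: $\mathrm{rad}(\mathcal{A})$ is the Jacobson radical and $\mathrm{rann}(\mathcal{A})=\{c\in\mathcal{A}: ac=0\ \forall a\in\mathcal{A}\}$. A derivation is a linear map $d$ with $d(ab)=d(a)b+ad(b)$; a generalized derivation $(\delta,d)$ consists of a derivation $d$ and linear $\delta$ with $\delta(ab)=a\delta(b)+d(a)b$. $Z(\mathcal{A})$ is the center; $\langle a,b\rangle=ab+ba$. $T$ is $k$-skew centralizing if $\langle T(a),a^k\rangle\in Z(\mathcal{A})$ for all $a$; skew centralizing means $1$-skew centralizing. *)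

theory Defs
  imports "HOL-Analysis.Analysis"
begin

text \<open>Powers a^k for k >= 1 in a possibly non-unital algebra
  (the value at k = 0 is an irrelevant convention and is never used).\<close>
primrec apow :: "'a::ring \<Rightarrow> nat \<Rightarrow> 'a" where
  "apow a 0 = 0"
| "apow a (Suc n) = (if n = 0 then a else apow a n * a)"

text \<open>Left quasi-regularity: (1 - c)(1 - x) = 1 in the unitization.\<close>
definition left_quasi_regular :: "'a::ring \<Rightarrow> bool" where
  "left_quasi_regular x \<longleftrightarrow> (\<exists>c. c + x - c * x = 0)"

text \<open>Jacobson radical of a (possibly non-unital) ring, via Jacobson's
  quasi-regularity characterization.\<close>
definition jrad :: "'a::ring set" where
  "jrad = {a. \<forall>b. left_quasi_regular (b * a)}"

definition rann :: "'a::ring set" where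
  "rann = {c. \<forall>a. a * c = 0}"

definition center :: "'a::ring set" where
  "center = {z. \<forall>a. z * a = a * z}"

definition derivation :: "('a::real_algebra \<Rightarrow> 'a) \<Rightarrow> bool" where
  "derivation d \<longleftrightarrow> linear d \<and> (\<forall>a b. d (a * b) = d a * b + a * d b)"

definition generalized_derivation :: "('a::real_algebra \<Rightarrow> 'a) \<Rightarrow> ('a \<Rightarrow> 'a) \<Rightarrow> bool" where
  "generalized_derivation \<delta> d \<longleftrightarrow> derivation d \<and> linear \<delta> \<and>
     (\<forall>a b. \<delta> (a * b) = a * \<delta> b + d a * b)"

definition anticomm :: "'a::ring \<Rightarrow> 'a \<Rightarrow> 'a" where
  "anticomm a b = a * b + b * a"

definition k_skew_centralizing :: "nat \<Rightarrow> ('a::ring \<Rightarrow> 'a) \<Rightarrow> bool" where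
  "k_skew_centralizing k T \<longleftrightarrow> (\<forall>a. anticomm (T a) (apow a k) \<in> center)"

definition skew_centralizing :: "('a::ring \<Rightarrow> 'a) \<Rightarrow> bool" where
  "skew_centralizing T \<longleftrightarrow> k_skew_centralizing 1 T"

end

theory Submission
  imports Defs
begin

lemma dbl_zero: "(x::'a::real_vector) + x = 0 \<Longrightarrow> x = 0"
proof -
  assume "x + x = 0"
  hence "(2::real) *\<^sub>R x = 0" by (simp add: scaleR_2)
  thus "x = 0" by simp
qed

lemma apowS: "1 \<le> m \<Longrightarrow> apow (a::'a::ring) (Suc m) = a * apow a m"
proof (induction m)
  case 0 then show ?case by simp
next
  case (Suc m)
  show ?case
  proof (cases "m = 0")
    case True then show ?thesis by simp
  next
    case False
    then have "apow a (Suc m) = a * apow a m" using Suc by simp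
    then show ?thesis using False by (simp add: mult.assoc)
  qed
qed

theorem corollary5p3:
  fixes \<delta> d :: "'a::{real_normed_algebra, banach} \<Rightarrow> 'a"
  assumes "(jrad :: 'a set) = rann"
    and "\<forall>a b :: 'a. a * b - b * a \<in> jrad"
    and "\<exists>e :: 'a. \<forall>a. a * e = a"
    and "generalized_derivation \<delta> d"
  shows "(skew_centralizing \<delta> \<longleftrightarrow> (\<forall>k\<ge>1. k_skew_centralizing k \<delta>))
       \<and> ((\<forall>k\<ge>1. k_skew_centralizing k \<delta>) \<longleftrightarrow> (\<exists>k\<ge>1. k_skew_centralizing k \<delta>))"
proof -
  from assms(3) obtain e :: 'a where e: "\<And>a. a * e = a" by blast
  have F1: "x * (y * z) = x * (z * y)" for x y z :: 'a
  proof -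
    have "y*z - z*y \<in> rann" using assms(1,2) by auto
    hence "x * (y*z - z*y) = 0" by (simp add: rann_def)
    thus ?thesis by (simp add: right_diff_distrib)
  qed
  have ae: "a * (e * x) = a * x" for a x by (metis mult.assoc e)
  have Nsub: "x - e*x \<in> rann" for x by (simp add: rann_def right_diff_distrib ae)
  have Nmul: "n \<in> rann \<Longrightarrow> x * n = 0" for n x :: 'a by (simp add: rann_def)
  have cen_intro: "z \<in> center" if z1: "e*z = z" and z2: "\<And>n. n\<in>rann \<Longrightarrow> n*z = 0" for z
  proof -
    { fix a
      have "a*z = (e*a)*z + (a - e*a)*z" by (simp add: algebra_simps)
      also have "... = e*a*z" using z2[OF Nsub] by simp
      also have "... = e*(a*z)" by (simp add: mult.assoc)
      also have "... = e*(z*a)" by (rule F1)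
      also have "... = z*a" using z1 by (simp add: mult.assoc[symmetric])
      finally have "z*a = a*z" by simp }
    thus ?thesis unfolding center_def by blast
  qed
  have cz: "z*a = a*z" if "z \<in> center" for z a :: 'a
    using that unfolding center_def by blast
  have cen_e: "e*z = z" if "z \<in> center" for z
  proof -
    have "e*z = z*e" by (rule cz[OF that, symmetric])
    thus ?thesis by (simp add: e)
  qed
  have cen_N: "n*z = 0" if "z \<in> center" "n \<in> rann" for z n :: 'a
  proof -
    have "n*z = z*n" by (rule cz[OF that(1), symmetric])
    thus ?thesis using Nmul[OF that(2), of z] by simp
  qed
  have cen_diff: "z1 - z2 \<in> center" if "z1 \<in> center" "z2 \<in> center" for z1 z2 :: 'a
  proof -
    { fix a :: 'a
      have "(z1 - z2)*a = z1*a - z2*a" by (rule left_diff_distrib)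
      also have "... = a*z1 - a*z2" using cz[OF that(1), of a] cz[OF that(2), of a] by simp
      also have "... = a*(z1 - z2)" by (rule right_diff_distrib[symmetric])
      finally have "(z1 - z2)*a = a*(z1 - z2)" . }
    thus ?thesis unfolding center_def by blast
  qed
  have cen_rmult: "z * y \<in> center" if "z \<in> center" for z y :: 'a
  proof -
    { fix x
      have "(z*y)*x = z*(y*x)" by (rule mult.assoc)
      also have "... = z*(x*y)" by (rule F1)
      also have "... = (z*x)*y" by (rule mult.assoc[symmetric])
      also have "... = (x*z)*y" using cz[OF that, of x] by simp
      finally have "(z*y)*x = x*(z*y)" by (simp add: mult.assoc) }
    thus ?thesis unfolding center_def by blast
  qed
  have ld: "linear d" and dmul: "\<And>a b. d (a*b) = d a * b + a * d b"
    and l\<delta>: "linear \<delta>" and gmul: "\<And>a b. \<delta> (a*b) = a * \<delta> b + d a * b"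
    using assms(4) by (auto simp: generalized_derivation_def derivation_def)
  define w where "w = \<delta> e"
  have \<delta>w: "\<delta> x = x*w + d x" for x
    using gmul[of x e] e by (simp add: w_def)
  have Zk: "anticomm (\<delta> a) (apow a (Suc m)) = anticomm (\<delta> a) a * apow a m" if "1 \<le> m" for a m
  proof -
    have A: "apow a (Suc m) = a * apow a m" by (rule apowS[OF that])
    have B: "(a * apow a m) * \<delta> a = a * (\<delta> a * apow a m)"
      by (metis mult.assoc F1)
    have "anticomm (\<delta> a) (apow a (Suc m)) = \<delta> a * (a * apow a m) + (a * apow a m) * \<delta> a"
      unfolding anticomm_def A ..
    also have "... = (\<delta> a * a + a * \<delta> a) * apow a m"
      unfolding B by (simp add: distrib_right mult.assoc)
    finally show ?thesis by (simp add: anticomm_def)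
  qed
  define K where "K \<longleftrightarrow> d e = 0 \<and> (\<forall>n\<in>rann. d n = 0 \<and> n*w = 0)"
  have KX: "anticomm (\<delta> a) a \<in> center" if K for a
  proof -
    from that have de: "d e = 0" and dn: "\<And>n. n\<in>rann \<Longrightarrow> d n = 0"
      and nw: "\<And>n. n\<in>rann \<Longrightarrow> n*w = 0" by (auto simp: K_def)
    define b where "b = a*a"
    have awa: "a*w*a = a*a*w" by (simp add: mult.assoc F1)
    have X: "anticomm (\<delta> a) a = d b + b*w + b*w"
      unfolding anticomm_def \<delta>w b_def dmul using awa by (simp add: algebra_simps)
    have db: "d b = d (e*b)"
    proof -
      have "d b = d (e*b) + d (b - e*b)" by (simp add: linear_diff[OF ld])
      thus ?thesis using dn[OF Nsub] by simp
    qed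
    have edb: "e * d b = d b" using db dmul[of e b] de by simp
    have bw: "b*w = e*b*w"
    proof -
      have "b*w = e*b*w + (b - e*b)*w" by (simp add: algebra_simps)
      also have "(b - e*b)*w = 0" using nw[OF Nsub] by simp
      finally show ?thesis by simp
    qed
    have ebw: "e*(b*w) = b*w" using bw by (simp add: mult.assoc)
    show ?thesis unfolding X
    proof (rule cen_intro)
      show "e * (d b + b * w + b * w) = d b + b * w + b * w"
        using edb ebw by (simp add: algebra_simps)
    next
      fix n :: 'a assume n: "n \<in> rann"
      have nb: "n*b \<in> rann" using n by (simp add: rann_def mult.assoc[symmetric])
      have "n * d b = 0" using dmul[of n b] dn[OF n] dn[OF nb] by simp
      moreover have "n * (b*w) = 0" using F1[of n b w] nw[OF n] by (simp add: mult.assoc[symmetric])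
      ultimately show "n * (d b + b * w + b * w) = 0" by (simp add: algebra_simps)
    qed
  qed
  have Kk: "k_skew_centralizing k \<delta>" if K and k1: "k \<ge> 1" for k
  proof -
    { fix a
      have "anticomm (\<delta> a) (apow a k) \<in> center"
      proof (cases "k = 1")
        case True then show ?thesis using KX[OF \<open>K\<close>] by simp
      next
        case False
        obtain m where m: "k = Suc m" "1 \<le> m" using k1 False
          by (cases k) auto
        show ?thesis using Zk[OF m(2)] m(1) cen_rmult KX[OF \<open>K\<close>] by simp
      qed }
    thus ?thesis by (simp add: k_skew_centralizing_def)
  qed
  have kK: K if "k \<ge> 1" "k_skew_centralizing k \<delta>" for k
  proof -
    have idem: "apow (e+n) k = e+n" if n: "n \<in> rann" for n
    proof -
      have qq: "(e+n)*(e+n) = e+n" using Nmul[OF n, of e] Nmul[OF n, of n] e[of e] e[of n]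
        by (simp add: algebra_simps)
      have "j \<ge> 1 \<Longrightarrow> apow (e+n) j = e+n" for j
      proof (induction j)
        case 0 then show ?case by simp
      next
        case (Suc j) then show ?case using qq by (cases "j = 0") auto
      qed
      thus ?thesis using \<open>k \<ge> 1\<close> .
    qed
    have Xc: "anticomm (\<delta> (e+n)) (e+n) \<in> center" if "n \<in> rann" for n
    proof -
      have "anticomm (\<delta> (e+n)) (apow (e+n) k) \<in> center"
        using \<open>k_skew_centralizing k \<delta>\<close> unfolding k_skew_centralizing_def by blast
      thus ?thesis unfolding idem[OF that] .
    qed
    have z0: "(0::'a) \<in> rann" by (simp add: rann_def)
    have Xe: "w + e*w \<in> center" using Xc[OF z0] e[of "\<delta> e"]
      by (simp add: anticomm_def w_def)
    have w1: "e*w = w" using cen_e[OF Xe] ae[of e w] e[of e] by (simp add: distrib_left)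
    have de: "d e = 0" using gmul[of e e] e[of e] e[of "d e"] w1 by (simp add: w_def)
    have nw: "n*w = 0" if n: "n \<in> rann" for n
    proof -
      have "n*(w + e*w) = 0" using cen_N[OF Xe n] .
      hence "n*w + n*w = 0" using ae[of n w] by (simp add: distrib_left)
      thus ?thesis by (rule dbl_zero)
    qed
    have dn: "d n = 0" if n: "n \<in> rann" for n
    proof -
      have mn: "-n \<in> rann" using n by (simp add: rann_def)
      have edn: "e * d n = 0"
      proof -
        have "d (e*n) = 0" using Nmul[OF n] linear_0[OF ld] by simp
        thus ?thesis using dmul[of e n] de by simp
      qed
      have dmn: "d (-n) = - d n" by (rule linear_neg[OF ld])
      have "anticomm (\<delta> (e+n)) (e+n) - anticomm (\<delta> (e+(-n))) (e+(-n)) = d n + d n"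
        unfolding anticomm_def \<delta>w dmn linear_add[OF ld]
        using e[of w] e[of "d n"] e[of e] e[of n] w1 de edn Nmul[OF n, of w] Nmul[OF n, of "d n"]
          Nmul[OF n, of e] nw[OF n]
        by (simp add: algebra_simps)
      hence c: "d n + d n \<in> center" using cen_diff[OF Xc[OF n] Xc[OF mn]] by simp
      have "e*(d n + d n) = 0" using edn by (simp add: algebra_simps)
      hence "d n + d n = 0" using cen_e[OF c] by simp
      thus ?thesis by (rule dbl_zero)
    qed
    show K using de dn nw by (simp add: K_def)
  qed
  have "\<forall>k\<ge>1. k_skew_centralizing k \<delta> \<longleftrightarrow> K" using Kk kK by blast
  thus ?thesis unfolding skew_centralizing_def by auto
qed

end
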